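(* Let $\psi$ be a reduced function with $\delta(\psi)<2$, let $(n_i)_{i\ge1}$ be its associated sequence, and let $(n'_i)_{i\ge1}$ be another increasing sequence of non-negative integers such that $n'_{i+1}=2n'_i-n'_{\psi(i)}$ for all sufficiently large $i$. Then $n'_i/n_i$ has a finite positive limit as $i\to\infty$, and $\delta(\psi)=\limsup_{i\to\infty} n'_{i+1}/n'_i$.
   Context: $\mathcal{A}$ is an alphabet disjoint from $\mathbb{N}^*=\{1,2,\dots\}$. A function here is a map $\psi:\mathbb{N}^*\to\mathbb{N}^*\sqcup\mathcal{A}$ such that for every $n\ge1$ either $\psi(n)\in\mathcal{A}$ or $1\le\psi(n)\le n-1$. Let $(t_k)_{k\ge0}$ be the (finite or infinite) family, in increasing order, of all $n\ge1$ with $\psi(n)\in\mathcal{A}$ or $1\le\psi(n)\le n-2$. $\psi$ is reduced if for every $k\ge1$ such that $t_k$ exists: $\psi(t_k)\ne\psi(t_{k-1})$, and either $\psi(t_k)\in\mathcal{A}$ or $\psi(t_k)<t_{k-1}$. The sequence associated with a reduced $\psi$ is defined by $n_1=0$ and, for $i\ge1$, $n_{i+1}=2n_i-n_{\psi(i)}$ if $\psi(i)\in\mathbb{N}^*$, $n_{i+1}=2n_i+1$ if $\psi(i)\in\mathcal{A}$; and $\delta(\psi)=\limsup_{i\to\infty} n_{i+1}/n_i$. *)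

theory Defs
  imports "HOL-Analysis.Analysis"
begin

text \<open>A function psi : N* -> N* (disjoint union) A is modelled as psi :: nat => nat + 'a,
  where Inl m is the positive integer m and Inr a is the letter a of the alphabet 'a.
  The value at 0 is irrelevant.\<close>

definition is_psi_function :: "(nat \<Rightarrow> nat + 'a) \<Rightarrow> bool" where
  "is_psi_function psi \<longleftrightarrow>
     (\<forall>n\<ge>1. case psi n of Inl m \<Rightarrow> 1 \<le> m \<and> m \<le> n - 1 | Inr _ \<Rightarrow> True)"

definition tset :: "(nat \<Rightarrow> nat + 'a) \<Rightarrow> nat set" where
  "tset psi = {n. n \<ge> 1 \<and> (case psi n of Inl m \<Rightarrow> 1 \<le> m \<and> m + 2 \<le> n | Inr _ \<Rightarrow> True)}"

definition reduced :: "(nat \<Rightarrow> nat + 'a) \<Rightarrow> bool" where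
  "reduced psi \<longleftrightarrow> is_psi_function psi \<and>
     (\<forall>s t. s \<in> tset psi \<and> t \<in> tset psi \<and> s < t \<and> (\<forall>j. s < j \<and> j < t \<longrightarrow> j \<notin> tset psi) \<longrightarrow>
        psi t \<noteq> psi s \<and> (case psi t of Inl m \<Rightarrow> m < s | Inr _ \<Rightarrow> True))"

text \<open>Associated sequence: n_1 = 0, n_(i+1) = 2 n_i - n_(psi i) or 2 n_i + 1.
  (Index 0 is a dummy; the guard j < Suc (Suc i) is automatic for functions psi.)\<close>
function assoc_seq :: "(nat \<Rightarrow> nat + 'a) \<Rightarrow> nat \<Rightarrow> int" where
  "assoc_seq psi 0 = 0"
| "assoc_seq psi (Suc 0) = 0"
| "assoc_seq psi (Suc (Suc i)) =
     (case psi (Suc i) of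
        Inl j \<Rightarrow> (if j < Suc (Suc i) then 2 * assoc_seq psi (Suc i) - assoc_seq psi j else 0)
      | Inr _ \<Rightarrow> 2 * assoc_seq psi (Suc i) + 1)"
  by pat_completeness auto
termination by (relation "Wellfounded.measure (\<lambda>(psi, n). n)") auto

definition delta :: "(nat \<Rightarrow> nat + 'a) \<Rightarrow> ereal" where
  "delta psi = limsup (\<lambda>i. ereal (real_of_int (assoc_seq psi (Suc i)) / real_of_int (assoc_seq psi i)))"

end

theory Submission
  imports Defs
begin


lemma contraction_conv:
  fixes x :: "nat \<Rightarrow> real" and C K :: nat and \<epsilon> :: real
  defines "mn \<equiv> \<lambda>k. Min (x ` {k-C..<k})" and "mx \<equiv> \<lambda>k. Max (x ` {k-C..<k})"
  assumes C: "C \<ge> 1" and ep: "0 < \<epsilon>" "\<epsilon> \<le> 1" and KC: "K \<ge> C"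
    and H: "\<And>k. k \<ge> K \<Longrightarrow> mn k + \<epsilon> * (x (k-1) - mn k) \<le> x k \<and> x k \<le> mx k - \<epsilon> * (mx k - x (k-1))"
  shows "\<exists>L. x \<longlonglongrightarrow> L \<and> L \<ge> mn K"
proof -
  have fin: "finite (x ` {k-C..<k})" for k by simp
  have ne: "k \<ge> C \<Longrightarrow> x ` {k-C..<k} \<noteq> {}" for k using C by auto
  have mnle: "k \<ge> C \<Longrightarrow> j \<in> {k-C..<k} \<Longrightarrow> mn k \<le> x j" for k j
    unfolding mn_def using fin by (intro Min_le) auto
  have mxge: "k \<ge> C \<Longrightarrow> j \<in> {k-C..<k} \<Longrightarrow> x j \<le> mx k" for k j
    unfolding mx_def using fin by (intro Max_ge) auto
  have mnex: "k \<ge> C \<Longrightarrow> \<exists>j\<in>{k-C..<k}. mn k = x j" for k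
    unfolding mn_def using fin ne by (metis (no_types, lifting) Min_in imageE)
  have mxex: "k \<ge> C \<Longrightarrow> \<exists>j\<in>{k-C..<k}. mx k = x j" for k
    unfolding mx_def using fin ne by (metis (no_types, lifting) Max_in imageE)
  have prev: "k \<ge> C \<Longrightarrow> k - 1 \<in> {k-C..<k}" for k using C by auto
  have xin: "mn k \<le> x k \<and> x k \<le> mx k" if "k \<ge> K" for k
  proof -
    have "mn k \<le> x (k-1)" "x (k-1) \<le> mx k" using mnle mxge prev that KC by auto
    moreover have "\<epsilon> * (x (k-1) - mn k) \<ge> 0" "\<epsilon> * (mx k - x (k-1)) \<ge> 0" using calculation ep by auto
    ultimately show ?thesis using H[OF that] by linarith
  qed
  have mn_mono: "mn k \<le> mn (Suc k)" if kK: "k \<ge> K" for k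
  proof -
    obtain j where j: "j \<in> {Suc k - C..<Suc k}" "mn (Suc k) = x j" using mnex[of "Suc k"] kK KC by auto
    show ?thesis
    proof (cases "j = k")
      case True then show ?thesis using j xin kK by auto
    next
      case False then have "j \<in> {k-C..<k}" using j by auto
      then show ?thesis using j mnle kK KC by auto
    qed
  qed
  have mx_mono: "mx (Suc k) \<le> mx k" if kK: "k \<ge> K" for k
  proof -
    obtain j where j: "j \<in> {Suc k - C..<Suc k}" "mx (Suc k) = x j" using mxex[of "Suc k"] kK KC by auto
    show ?thesis
    proof (cases "j = k")
      case True then show ?thesis using j xin kK by auto
    next
      case False then have "j \<in> {k-C..<k}" using j by auto
      then show ?thesis using j mxge kK KC by auto
    qed
  qed
  have mn_mono': "mn k \<le> mn l" if "K \<le> k" "k \<le> l" for k l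
    using that(2) proof (induction l rule: dec_induct)
    case (step m) then show ?case using mn_mono[of m] that by auto
  qed simp
  have mx_mono': "mx l \<le> mx k" if "K \<le> k" "k \<le> l" for k l
    using that(2) proof (induction l rule: dec_induct)
    case (step m) then show ?case using mx_mono[of m] that by auto
  qed simp
  define osc where "osc k = mx k - mn k" for k
  have osc_mono: "osc l \<le> osc k" if "K \<le> k" "k \<le> l" for k l
    using mn_mono' mx_mono' that unfolding osc_def by (smt (verit))
  have osc_nn: "osc k \<ge> 0" if "K \<le> k" for k
    using xin[OF that] unfolding osc_def by auto
  define \<rho> where "\<rho> = 1 - \<epsilon>^C / 2"
  have epC: "0 < \<epsilon>^C" "\<epsilon>^C \<le> 1" using ep by (auto simp: power_le_one)
  have step: "osc (k + C) \<le> \<rho> * osc k" if k: "k \<ge> K" for k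
  proof (cases "x (k-1) \<ge> (mn k + mx k) / 2")
    case True
    have A: "x (k+j) - mn k \<ge> \<epsilon>^(Suc j) * osc k / 2" for j
    proof (induction j)
      case 0
      have "x k - mn k \<ge> \<epsilon> * (x (k-1) - mn k)" using H[OF k] by linarith
      moreover have "\<epsilon> * (x (k-1) - mn k) \<ge> \<epsilon> * (osc k / 2)"
        using True ep unfolding osc_def by (intro mult_left_mono) auto
      ultimately show ?case by simp
    next
      case (Suc j)
      have kk: "k + Suc j \<ge> K" "k + j \<ge> K" using k by auto
      have "x (k + Suc j) \<ge> mn (k + Suc j) + \<epsilon> * (x (k + j) - mn (k + Suc j))"
        using H[OF kk(1)] by simp
      hence "x (k + Suc j) \<ge> (1 - \<epsilon>) * mn (k + Suc j) + \<epsilon> * x (k + j)" by (simp add: algebra_simps)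
      moreover have "(1 - \<epsilon>) * mn (k + Suc j) \<ge> (1 - \<epsilon>) * mn k"
        using mn_mono'[of k "k + Suc j"] k ep by (intro mult_left_mono) auto
      ultimately have "x (k + Suc j) - mn k \<ge> \<epsilon> * (x (k+j) - mn k)" by (simp add: algebra_simps)
      moreover have "\<epsilon> * (x (k+j) - mn k) \<ge> \<epsilon> * (\<epsilon>^(Suc j) * osc k / 2)"
        using Suc ep by (intro mult_left_mono) auto
      ultimately show ?case by simp
    qed
    have "mn (k + C) \<ge> mn k + \<epsilon>^C * osc k / 2"
    proof -
      obtain j where j: "j \<in> {k + C - C..<k + C}" "mn (k+C) = x j" using mnex[of "k+C"] by auto
      then obtain i where i: "j = k + i" "i < C" by (metis add_diff_cancel_right' atLeastLessThan_iff le_Suc_ex nat_add_left_cancel_less)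
      have "\<epsilon>^C \<le> \<epsilon>^(Suc i)" using i ep by (intro power_decreasing) auto
      hence "\<epsilon>^C * osc k / 2 \<le> \<epsilon>^(Suc i) * osc k / 2" using osc_nn[OF k]
        by (intro divide_right_mono mult_right_mono) auto
      then show ?thesis using A[of i] i j by auto
    qed
    moreover have "mx (k+C) \<le> mx k" using mx_mono'[of k "k+C"] k by auto
    ultimately show ?thesis unfolding osc_def \<rho>_def by (simp add: algebra_simps)
  next
    case False
    have A: "mx k - x (k+j) \<ge> \<epsilon>^(Suc j) * osc k / 2" for j
    proof (induction j)
      case 0
      have "mx k - x k \<ge> \<epsilon> * (mx k - x (k-1))" using H[OF k] by linarith
      moreover have "\<epsilon> * (mx k - x (k-1)) \<ge> \<epsilon> * (osc k / 2)"
        using False ep unfolding osc_def by (intro mult_left_mono) auto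
      ultimately show ?case by simp
    next
      case (Suc j)
      have kk: "k + Suc j \<ge> K" "k + j \<ge> K" using k by auto
      have "x (k + Suc j) \<le> mx (k + Suc j) - \<epsilon> * (mx (k + Suc j) - x (k + j))"
        using H[OF kk(1)] by simp
      hence "x (k + Suc j) \<le> (1 - \<epsilon>) * mx (k + Suc j) + \<epsilon> * x (k + j)" by (simp add: algebra_simps)
      moreover have "(1 - \<epsilon>) * mx (k + Suc j) \<le> (1 - \<epsilon>) * mx k"
        using mx_mono'[of k "k + Suc j"] k ep by (intro mult_left_mono) auto
      ultimately have "mx k - x (k + Suc j) \<ge> \<epsilon> * (mx k - x (k+j))" by (simp add: algebra_simps)
      moreover have "\<epsilon> * (mx k - x (k+j)) \<ge> \<epsilon> * (\<epsilon>^(Suc j) * osc k / 2)"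
        using Suc ep by (intro mult_left_mono) auto
      ultimately show ?case by simp
    qed
    have "mx (k + C) \<le> mx k - \<epsilon>^C * osc k / 2"
    proof -
      obtain j where j: "j \<in> {k + C - C..<k + C}" "mx (k+C) = x j" using mxex[of "k+C"] by auto
      then obtain i where i: "j = k + i" "i < C" by (metis add_diff_cancel_right' atLeastLessThan_iff le_Suc_ex nat_add_left_cancel_less)
      have "\<epsilon>^C \<le> \<epsilon>^(Suc i)" using i ep by (intro power_decreasing) auto
      hence "\<epsilon>^C * osc k / 2 \<le> \<epsilon>^(Suc i) * osc k / 2" using osc_nn[OF k]
        by (intro divide_right_mono mult_right_mono) auto
      then show ?thesis using A[of i] i j by auto
    qed
    moreover have "mn (k+C) \<ge> mn k" using mn_mono'[of k "k+C"] k by auto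
    ultimately show ?thesis unfolding osc_def \<rho>_def by (simp add: algebra_simps)
  qed
  have rho: "0 \<le> \<rho>" "\<rho> < 1" using epC unfolding \<rho>_def by auto
  have pw: "osc (K + m * C) \<le> \<rho>^m * osc K" for m
  proof (induction m)
    case (Suc m)
    have "osc (K + Suc m * C) = osc ((K + m * C) + C)" by (simp add: algebra_simps)
    also have "\<dots> \<le> \<rho> * osc (K + m*C)" by (rule step) simp
    also have "\<dots> \<le> \<rho> * (\<rho>^m * osc K)" using Suc rho by (intro mult_left_mono) auto
    finally show ?case by simp
  qed simp
  have osc0: "\<exists>M\<ge>K. \<forall>k\<ge>M. osc k < e" if e: "e > 0" for e
  proof -
    obtain m where m: "\<rho>^m < e / (osc K + 1)"
      using real_arch_pow_inv[of "e / (osc K + 1)" \<rho>] e rho osc_nn[of K] by auto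
    have "\<rho>^m * osc K \<le> \<rho>^m * (osc K + 1)" using rho by (intro mult_left_mono) auto
    also have "\<dots> < e" using m osc_nn[of K] by (simp add: field_simps)
    finally have "osc (K + m*C) < e" using pw[of m] by auto
    then show ?thesis using osc_mono[of "K + m*C"] by (intro exI[of _ "K + m*C"]) (auto intro: le_less_trans)
  qed
  have xbd: "mn k \<le> x l \<and> x l \<le> mx k" if "K \<le> k" "k \<le> l" for k l
    using xin[of l] mn_mono'[of k l] mx_mono'[of k l] that by auto
  have "Cauchy x"
  proof (rule CauchyI)
    fix e :: real assume "e > 0"
    then obtain M where M: "M \<ge> K" "\<forall>k\<ge>M. osc k < e" using osc0 by blast
    show "\<exists>M. \<forall>m\<ge>M. \<forall>n\<ge>M. norm (x m - x n) < e"
    proof (intro exI allI impI)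
      fix m n assume "m \<ge> M" "n \<ge> M"
      then have "mn M \<le> x m" "x m \<le> mx M" "mn M \<le> x n" "x n \<le> mx M" using xbd M by auto
      then show "norm (x m - x n) < e" using M(2)[rule_format, of M] unfolding osc_def by auto
    qed
  qed
  then obtain L where L: "x \<longlonglongrightarrow> L" using Cauchy_convergent_iff convergent_def by blast
  have "mn K \<le> L"
    by (rule LIMSEQ_le_const[OF L]) (use xbd in auto)
  then show ?thesis using L by auto
qed




lemma stolz:
  fixes a b :: "nat \<Rightarrow> real"
  assumes inc: "\<forall>i\<ge>N. a (Suc i) > a i" and pos: "\<forall>i\<ge>N. a i > 0" and lim: "filterlim a at_top sequentially"
    and rl: "(\<lambda>i. (b (Suc i) - b i)/(a (Suc i) - a i)) \<longlonglongrightarrow> L"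
  shows "(\<lambda>i. b i / a i) \<longlonglongrightarrow> L"
proof (rule LIMSEQ_I)
  fix r :: real assume r: "r > 0"
  obtain I0 where I0: "\<forall>i\<ge>I0. norm ((b (Suc i) - b i)/(a (Suc i) - a i) - L) < r/2"
    using LIMSEQ_D[OF rl, of "r/2"] r by auto
  define I where "I = max I0 N"
  have st: "\<bar>(b (Suc i) - L * a (Suc i)) - (b i - L * a i)\<bar> \<le> r/2 * (a (Suc i) - a i)" if "i \<ge> I" for i
  proof -
    have d: "a (Suc i) - a i > 0" using inc that unfolding I_def by auto
    have "\<bar>(b (Suc i) - b i)/(a (Suc i) - a i) - L\<bar> < r/2" using I0 that unfolding I_def by auto
    moreover have "(b (Suc i) - b i)/(a (Suc i) - a i) - L = ((b (Suc i) - b i) - L * (a (Suc i) - a i))/(a (Suc i) - a i)"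
      using d by (simp add: diff_divide_distrib)
    ultimately have "\<bar>(b (Suc i) - b i) - L * (a (Suc i) - a i)\<bar> / (a (Suc i) - a i) < r/2"
      using d by (simp add: abs_divide)
    hence "\<bar>(b (Suc i) - b i) - L * (a (Suc i) - a i)\<bar> < r/2 * (a (Suc i) - a i)"
      using d by (simp add: pos_divide_less_eq)
    then show ?thesis by (simp add: algebra_simps)
  qed
  define c where "c = \<bar>b I - L * a I\<bar>"
  have acc: "\<bar>(b j - L * a j) - (b I - L * a I)\<bar> \<le> r/2 * (a j - a I)" if "j \<ge> I" for j
    using that
  proof (induction j rule: dec_induct)
    case (step m)
    have "\<bar>(b (Suc m) - L * a (Suc m)) - (b I - L * a I)\<bar> \<le>
       \<bar>(b (Suc m) - L * a (Suc m)) - (b m - L * a m)\<bar> + \<bar>(b m - L * a m) - (b I - L * a I)\<bar>" by linarith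
    also have "\<dots> \<le> r/2 * (a (Suc m) - a m) + r/2 * (a m - a I)" using st[OF step(1)] step(3) by linarith
    also have "\<dots> = r/2 * (a (Suc m) - a I)" by (simp add: field_simps)
    finally show ?case .
  qed simp
  have "eventually (\<lambda>j. 2 * c / r + 1 \<le> a j) sequentially"
    using lim unfolding filterlim_at_top by auto
  then obtain M where M: "\<forall>j\<ge>M. 2 * c / r + 1 \<le> a j" unfolding eventually_sequentially by auto
  show "\<exists>no. \<forall>n\<ge>no. norm (b n / a n - L) < r"
  proof (intro exI allI impI)
    fix j assume j: "j \<ge> max M I"
    have aI: "a I > 0" using pos unfolding I_def by auto
    have aj: "a j \<ge> 2 * c / r + 1" using M j by auto
    have c0: "c \<ge> 0" unfolding c_def by auto
    have ajp: "a j > 0" using aj c0 r by (smt (verit, best) divide_nonneg_pos mult_nonneg_nonneg)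
    have "\<bar>b j - L * a j\<bar> \<le> r/2 * (a j - a I) + c" using acc[of j] j unfolding c_def by linarith
    also have "\<dots> < r/2 * a j + r/2 * a j"
    proof -
      have "2 * c / r < a j" using aj by auto
      hence "2 * c < a j * r" using r by (simp add: pos_divide_less_eq)
      moreover have "r * a I > 0" using aI r by simp
      ultimately show ?thesis by (simp add: field_simps)
    qed
    finally have "\<bar>b j - L * a j\<bar> < r * a j" by simp
    hence "\<bar>b j - L * a j\<bar> / a j < r" using ajp by (simp add: pos_divide_less_eq mult.commute)
    moreover have "b j / a j - L = (b j - L * a j) / a j" using ajp by (simp add: diff_divide_distrib)
    ultimately show "norm (b j / a j - L) < r" using ajp by (simp add: abs_divide)
  qed
qed




locale setting =
  fixes a b :: "nat \<Rightarrow> real" and p :: "nat \<Rightarrow> nat" and N :: nat and c :: real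
  assumes N1: "N \<ge> 1"
  and pp: "\<And>i. i \<ge> N \<Longrightarrow> 1 \<le> p i \<and> p i < i"
  and ra: "\<And>i. i \<ge> N \<Longrightarrow> a (Suc i) = 2 * a i - a (p i)"
  and rb: "\<And>i. i \<ge> N \<Longrightarrow> b (Suc i) = 2 * b i - b (p i)"
  and da: "\<And>i. i \<ge> 1 \<Longrightarrow> a (Suc i) - a i \<ge> 1"
  and db: "\<And>i. i \<ge> 1 \<Longrightarrow> b (Suc i) - b i > 0"
  and a0: "\<And>i. i \<ge> 1 \<Longrightarrow> a i \<ge> 0"
  and cpos: "c > 0"
  and cp: "\<And>i. i \<ge> N \<Longrightarrow> a (p i) > c * a i"
  and red: "\<And>s t. N \<le> s \<Longrightarrow> s < t \<Longrightarrow> p s + 2 \<le> s \<Longrightarrow> p t + 2 \<le> t \<Longrightarrow>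
              (\<forall>j. s < j \<and> j < t \<longrightarrow> \<not> p j + 2 \<le> j) \<Longrightarrow> p t < s"
begin

definition "d i = a (Suc i) - a i"
definition "e i = b (Suc i) - b i"
definition "r i = e i / d i"
definition "J = {i. i \<ge> N \<and> p i + 2 \<le> i}"

lemma d_pos: "i \<ge> 1 \<Longrightarrow> d i \<ge> 1" using da d_def by auto
lemma e_pos: "i \<ge> 1 \<Longrightarrow> e i > 0" using db e_def by auto
lemma r_pos: "i \<ge> 1 \<Longrightarrow> r i > 0" proof -
  assume "i \<ge> 1" then have "d i > 0" "e i > 0" using d_pos e_pos by force+
  then show ?thesis unfolding r_def by simp
qed

lemma a_mono: assumes "1 \<le> i" "i \<le> j" shows "a i \<le> a j"
  using assms(2) proof (induction j rule: dec_induct)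
  case (step n) then show ?case using da[of n] assms(1) by auto
qed simp

lemma a_strict: "1 \<le> i \<Longrightarrow> i < j \<Longrightarrow> a i < a j"
  using a_mono[of "Suc i" j] da[of i] by auto

lemma d_win: "i \<ge> N \<Longrightarrow> d i = a i - a (p i)" using ra d_def by auto
lemma e_win: "i \<ge> N \<Longrightarrow> e i = b i - b (p i)" using rb e_def by auto

lemma nonjump: "i \<ge> N \<Longrightarrow> i \<notin> J \<Longrightarrow> p i = i - 1"
  using pp[of i] unfolding J_def by auto

lemma nonjump_de: "Suc i \<ge> N \<Longrightarrow> Suc i \<notin> J \<Longrightarrow> d (Suc i) = d i \<and> e (Suc i) = e i"
  using nonjump[of "Suc i"] d_win[of "Suc i"] e_win[of "Suc i"] unfolding d_def e_def by auto

lemma incr: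
  assumes P1: "1 \<le> P" and PQ: "P \<le> Q" and H: "\<forall>j. P \<le> j \<and> j < Q \<longrightarrow> m \<le> r j \<and> r j \<le> M"
  shows "m * (a Q - a P) \<le> b Q - b P \<and> b Q - b P \<le> M * (a Q - a P)"
proof -
  have "\<forall>Q'. P \<le> Q' \<and> Q' \<le> Q \<longrightarrow> m * (a Q' - a P) \<le> b Q' - b P \<and> b Q' - b P \<le> M * (a Q' - a P)"
  proof (intro allI)
    fix Q' show "P \<le> Q' \<and> Q' \<le> Q \<longrightarrow> m * (a Q' - a P) \<le> b Q' - b P \<and> b Q' - b P \<le> M * (a Q' - a P)"
    proof (induction Q')
      case 0 then show ?case using P1 by simp
    next
      case (Suc n)
      show ?case
      proof (cases "P = Suc n")
        case True then show ?thesis by simp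
      next
        case False
        show ?thesis
        proof
          assume A: "P \<le> Suc n \<and> Suc n \<le> Q"
          then have B: "P \<le> n" "n < Q" using False by auto
          have dn: "d n > 0" using d_pos[of n] B P1 by auto
          have "m \<le> r n \<and> r n \<le> M" using H B by blast
          hence "m \<le> e n / d n" "e n / d n \<le> M" by (auto simp: r_def)
          hence "m * d n \<le> e n" "e n \<le> M * d n" using dn by (auto simp: pos_le_divide_eq pos_divide_le_eq)
          moreover have "m * (a n - a P) \<le> b n - b P \<and> b n - b P \<le> M * (a n - a P)" using Suc.IH B by auto
          ultimately show "m * (a (Suc n) - a P) \<le> b (Suc n) - b P \<and> b (Suc n) - b P \<le> M * (a (Suc n) - a P)"
            unfolding d_def e_def by (simp add: algebra_simps)
        qed
      qed
    qed
  qed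
  then show ?thesis using PQ by auto
qed

lemma finite_case:
  assumes "finite J"
  shows "\<exists>L>0. r \<longlonglongrightarrow> L"
proof -
  obtain B where B: "\<forall>i\<in>J. i \<le> B" using assms finite_nat_set_iff_bounded_le by blast
  define N' where "N' = max N (Suc B)"
  have N'1: "N' \<ge> N" unfolding N'_def by simp
  have N'2: "i \<notin> J" if "i \<ge> N'" for i
  proof
    assume "i \<in> J" then have "i \<le> B" using B by blast
    then show False using that unfolding N'_def by simp
  qed
  have rc: "r i = r N'" if "i \<ge> N'" for i
    using that
  proof (induction i rule: dec_induct)
    case (step n)
    have "Suc n \<ge> N" "Suc n \<notin> J" using step(1) N'1 N'2[of "Suc n"] by simp_all
    then have "d (Suc n) = d n \<and> e (Suc n) = e n" by (rule nonjump_de)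
    then show ?case using step(3) unfolding r_def by simp
  qed simp
  have "eventually (\<lambda>i. r N' = r i) sequentially" unfolding eventually_sequentially using rc by metis
  then have "r \<longlonglongrightarrow> r N'" by (rule Lim_transform_eventually[OF tendsto_const])
  moreover have "r N' > 0" using r_pos N'1 N1 by simp
  ultimately show ?thesis by blast
qed

end

locale inf_setting = setting + assumes infJ: "infinite J"
begin

lemma ex_next: "\<exists>y. y \<in> J \<and> x < y"
  using infJ infinite_nat_iff_unbounded by auto

primrec t :: "nat \<Rightarrow> nat" where
  "t 0 = (LEAST y. y \<in> J)"
| "t (Suc k) = (LEAST y. y \<in> J \<and> t k < y)"

lemma t_in: "t k \<in> J"
proof (cases k)
  case 0 then show ?thesis using ex_next[of 0] by (auto intro: LeastI_ex)
next
  case (Suc k') then show ?thesis using LeastI_ex[OF ex_next[of "t k'"]] by auto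
qed

lemma t_less: "t k < t (Suc k)"
  using LeastI_ex[OF ex_next[of "t k"]] by auto

lemma t_min: "y \<in> J \<Longrightarrow> t k < y \<Longrightarrow> t (Suc k) \<le> y"
  by (auto intro: Least_le)

lemma t0_min: "y \<in> J \<Longrightarrow> t 0 \<le> y"
  by (auto intro: Least_le)

lemma t_strict: "strict_mono t"
  using t_less by (simp add: strict_mono_Suc_iff)

lemma t_ge_N: "t k \<ge> N" using t_in J_def by auto

lemma J_ge_N: "j \<in> J \<Longrightarrow> j \<ge> N" using J_def by auto

lemma block_const: assumes "t k \<le> j" "j < t (Suc k)" shows "d j = d (t k) \<and> e j = e (t k)"
  using assms
proof (induction j rule: dec_induct)
  case (step n)
  have "Suc n \<notin> J"
  proof
    assume "Suc n \<in> J"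
    then have "t (Suc k) \<le> Suc n" using step(1) by (intro t_min) auto
    then show False using step(4) by simp
  qed
  moreover have "Suc n \<ge> N" using step(1) t_ge_N[of k] by simp
  ultimately have "d (Suc n) = d n \<and> e (Suc n) = e n" using nonjump_de by blast
  then show ?case using step by simp
qed simp

lemma a_block: assumes "t k \<le> j" "j \<le> t (Suc k)"
  shows "a j = a (t k) + real (j - t k) * d (t k) \<and> b j = b (t k) + real (j - t k) * e (t k)"
  using assms
proof (induction j rule: dec_induct)
  case (step n)
  have "d n = d (t k) \<and> e n = e (t k)" using step by (intro block_const) auto
  moreover have "Suc n - t k = Suc (n - t k)" using step(1) by simp
  ultimately show ?case using step unfolding d_def e_def by (simp add: algebra_simps)
qed simp

lemma cover: assumes "t 0 \<le> i" shows "\<exists>k. t k \<le> i \<and> i < t (Suc k)"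
  using assms
proof (induction i rule: dec_induct)
  case base then show ?case using t_less[of 0] by blast
next
  case (step n)
  then obtain k where k: "t k \<le> n" "n < t (Suc k)" by blast
  show ?case
  proof (cases "Suc n < t (Suc k)")
    case True then show ?thesis using k by (intro exI[of _ k]) simp
  next
    case False then have "Suc n = t (Suc k)" using k by simp
    then show ?thesis using t_less[of "Suc k"] by (intro exI[of _ "Suc k"]) simp
  qed
qed

lemma pt_lt: "p (t (Suc k)) < t k"
proof (rule red)
  show "N \<le> t k" by (rule t_ge_N)
  show "t k < t (Suc k)" by (rule t_less)
  show "p (t k) + 2 \<le> t k" using t_in[of k] J_def by auto
  show "p (t (Suc k)) + 2 \<le> t (Suc k)" using t_in[of "Suc k"] J_def by auto
  show "\<forall>j. t k < j \<and> j < t (Suc k) \<longrightarrow> \<not> p j + 2 \<le> j"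
  proof (intro allI impI)
    fix j assume j: "t k < j \<and> j < t (Suc k)"
    have "j \<notin> J"
    proof
      assume "j \<in> J" then have "t (Suc k) \<le> j" using j t_min by blast
      then show False using j by simp
    qed
    moreover have "j \<ge> N" using j t_ge_N[of k] by simp
    ultimately show "\<not> p j + 2 \<le> j" unfolding J_def by simp
  qed
qed

end



context inf_setting begin

definition "D k = d (t k)"
definition "E k = e (t k)"
definition "R k = r (t k)"
definition "u k = a (t k)"
definition "l k = real (t (Suc k) - t k)"
definition "K0 = max 0 (u 1 - 2 * D 1 - D 0)"
definition "B = 3 + K0"

lemma D_ge1: "D k \<ge> 1" using d_pos t_ge_N[of k] N1 D_def by auto
lemma l_ge1: "l k \<ge> 1" using t_less[of k] l_def by auto
lemma K0_nn: "K0 \<ge> 0" unfolding K0_def by simp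
lemma t_ge1: "t k \<ge> 1" using t_ge_N[of k] N1 by simp

lemma u_Suc: "u (Suc k) = u k + l k * D k"
  using a_block[of k "t (Suc k)"] t_less[of k] unfolding u_def l_def D_def by simp

lemma b_Suc: "b (t (Suc k)) = b (t k) + l k * E k"
  using a_block[of k "t (Suc k)"] t_less[of k] unfolding E_def l_def by simp

lemma p_facts: "1 \<le> p (t k) \<and> p (t k) < t k" using pp[OF t_ge_N] by blast

lemma D_win: "D k = u k - a (p (t k))"
  using d_win[OF t_ge_N] unfolding D_def u_def by simp

lemma ap_nn: "a (p (t k)) \<ge> 0" using a0 p_facts by blast

lemma ap_le: "a (p (t (Suc k))) \<le> u k"
  using a_mono[of "p (t (Suc k))" "t k"] p_facts[of "Suc k"] pt_lt[of k] unfolding u_def by simp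

lemma D_Suc_ge: "D (Suc k) \<ge> l k * D k"
  using D_win[of "Suc k"] u_Suc[of k] ap_le[of k] by simp

lemma D_SS: "D (Suc (Suc k)) \<ge> l (Suc k) * D (Suc k) + D k"
proof -
  let ?q = "t (Suc k) - 1"
  have q1: "t k \<le> ?q" "?q < t (Suc k)" using t_less[of k] by auto
  have "a (p (t (Suc (Suc k)))) \<le> a ?q"
    using a_mono[of "p (t (Suc (Suc k)))" ?q] p_facts[of "Suc (Suc k)"] pt_lt[of "Suc k"] by simp
  moreover have "a (t (Suc k)) = a ?q + d ?q" unfolding d_def using q1 by simp
  moreover have "d ?q = D k" using block_const[OF q1] D_def by simp
  ultimately show ?thesis using D_win[of "Suc (Suc k)"] u_Suc[of "Suc k"] unfolding u_def by simp
qed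

lemma D_mono: "D k \<le> D (Suc k)"
proof -
  have "D k \<le> l k * D k" using l_ge1[of k] D_ge1[of k] by simp
  then show ?thesis using D_Suc_ge[of k] by simp
qed

lemma D2: "D (k + 2) \<ge> 2 * D k"
proof -
  have "D (Suc (Suc k)) \<ge> l (Suc k) * D (Suc k) + D k" by (rule D_SS)
  moreover have "l (Suc k) * D (Suc k) \<ge> D (Suc k)" using l_ge1[of "Suc k"] D_ge1[of "Suc k"] by simp
  ultimately show ?thesis using D_mono[of k] by simp
qed

lemma D2m: "D (k + 2 * m) \<ge> 2 ^ m * D k"
proof (induction m)
  case (Suc m)
  have "D (k + 2 * Suc m) = D ((k + 2 * m) + 2)" by (simp add: algebra_simps)
  also have "\<dots> \<ge> 2 * D (k + 2 * m)" by (rule D2)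
  finally show ?case using Suc by simp
qed simp

lemma pot: "u (Suc k) \<le> 2 * D (Suc k) + D k + K0"
proof (induction k)
  case 0 then show ?case unfolding K0_def by simp
next
  case (Suc k)
  have "u (Suc (Suc k)) = u (Suc k) + l (Suc k) * D (Suc k)" by (rule u_Suc)
  moreover have "D (Suc (Suc k)) \<ge> l (Suc k) * D (Suc k) + D k" by (rule D_SS)
  moreover have "D (Suc (Suc k)) \<ge> D (Suc k)" by (rule D_mono)
  ultimately show ?case using Suc by linarith
qed

lemma uB: assumes "k \<ge> 1" shows "u k \<le> B * D k"
proof -
  obtain k' where k': "k = Suc k'" using assms by (cases k) auto
  have "u k \<le> 2 * D k + D k' + K0" using pot[of k'] k' by simp
  moreover have "D k' \<le> D k" using D_mono[of k'] k' by simp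
  moreover have "K0 \<le> K0 * D k" using K0_nn D_ge1[of k] by (simp add: mult_le_cancel_left1)
  ultimately show ?thesis unfolding B_def by (simp add: algebra_simps)
qed

lemma B_pos: "B \<ge> 3" unfolding B_def using K0_nn by simp

lemma weight: assumes "k \<ge> 1" shows "D (Suc k) \<le> (B + 1) * (l k * D k)"
proof -
  have "D (Suc k) \<le> u (Suc k)" using D_win[of "Suc k"] ap_nn[of "Suc k"] by simp
  also have "\<dots> = u k + l k * D k" by (rule u_Suc)
  also have "\<dots> \<le> B * D k + l k * D k" using uB[OF assms] by simp
  also have "B * D k \<le> B * (l k * D k)"
    using B_pos l_ge1[of k] D_ge1[of k] by (intro mult_left_mono) auto
  finally show ?thesis by (simp add: algebra_simps)
qed

end



context inf_setting begin

declare t.simps(2)[simp del]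

lemma depth: assumes m: "B < 2^m * c" and k: "2*m \<le> k" shows "t (Suc k - 2*m) \<le> p (t (Suc k))"
proof (rule ccontr)
  let ?P = "p (t (Suc k))" and ?j = "Suc k - 2*m"
  assume "\<not> t ?j \<le> ?P"
  then have s1: "a ?P \<le> u ?j" unfolding u_def using p_facts[of "Suc k"] by (intro a_mono) auto
  have s2: "u ?j \<le> B * D ?j" using k by (intro uB) auto
  have s3: "B * D ?j < 2^m * c * D ?j" using m D_ge1[of ?j] by (intro mult_strict_right_mono) auto
  have s4: "c * (2^m * D ?j) \<le> c * D (Suc k)" using D2m[where k="?j" and m=m] k cpos by (intro mult_left_mono) auto
  have s5: "c * D (Suc k) \<le> c * u (Suc k)" using D_win[of "Suc k"] ap_nn[of "Suc k"] cpos by (intro mult_left_mono) auto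
  have s6: "c * u (Suc k) < a ?P" using cp[OF t_ge_N[of "Suc k"]] unfolding u_def by simp
  have "2^m * c * D ?j = c * (2^m * D ?j)" by simp
  then show False using s1 s2 s3 s4 s5 s6 by linarith
qed

lemma main_step:
  assumes m: "B < 2^m * c" "1 \<le> m" and k: "2*m \<le> k"
  defines "mn \<equiv> Min (R ` {Suc k - 2*m..<Suc k})" and "mx \<equiv> Max (R ` {Suc k - 2*m..<Suc k})"
  shows "mn + (1/(B+1)) * (R k - mn) \<le> R (Suc k) \<and> R (Suc k) \<le> mx - (1/(B+1)) * (mx - R k)"
proof -
  let ?W = "{Suc k - 2*m..<Suc k}"
  have finW: "finite (R ` ?W)" by simp
  have inW: "mn \<le> R k' \<and> R k' \<le> mx" if "k' \<in> ?W" for k'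
    unfolding mn_def mx_def using finW that by (auto intro: Min_le Max_ge)
  have rW: "\<forall>j. t (Suc k - 2*m) \<le> j \<and> j < t (Suc k) \<longrightarrow> mn \<le> r j \<and> r j \<le> mx"
  proof (intro allI impI)
    fix j assume j: "t (Suc k - 2*m) \<le> j \<and> j < t (Suc k)"
    have "t 0 \<le> j" using j strict_mono_less_eq[OF t_strict, of 0 "Suc k - 2*m"] by simp
    then obtain k' where k': "t k' \<le> j" "j < t (Suc k')" using cover by blast
    have "Suc k - 2*m \<le> k'"
    proof (rule ccontr)
      assume "\<not> Suc k - 2*m \<le> k'"
      then have "t (Suc k') \<le> t (Suc k - 2*m)" using strict_mono_less_eq[OF t_strict] by simp
      then show False using j k' by simp
    qed
    moreover have "k' < Suc k"
    proof (rule ccontr)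
      assume "\<not> k' < Suc k"
      then have "t (Suc k) \<le> t k'" using strict_mono_less_eq[OF t_strict] by simp
      then show False using j k' by simp
    qed
    ultimately have "k' \<in> ?W" by simp
    moreover have "r j = R k'" using block_const[OF k'] unfolding r_def R_def by simp
    ultimately show "mn \<le> r j \<and> r j \<le> mx" using inW by simp
  qed
  have Rk: "mn \<le> R k" "R k \<le> mx" using inW[of k] m(2) by auto
  define P where "P = p (t (Suc k))"
  define Q where "Q = t k"
  have P1: "1 \<le> P" using p_facts[of "Suc k"] P_def by simp
  have PQ: "P \<le> Q" using pt_lt[of k] P_def Q_def by simp
  have PQr: "\<forall>j. P \<le> j \<and> j < Q \<longrightarrow> mn \<le> r j \<and> r j \<le> mx"
    using rW depth[OF m(1) k] t_less[of k] unfolding P_def Q_def by auto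
  define X where "X = a Q - a P"
  define Y where "Y = b Q - b P"
  have XY: "mn * X \<le> Y" "Y \<le> mx * X" using incr[OF P1 PQ PQr] unfolding X_def Y_def by auto
  define W where "W = l k * D k"
  define Dn where "Dn = D (Suc k)"
  define En where "En = E (Suc k)"
  have Dk: "D k > 0" using D_ge1[of k] by simp
  have Ek: "E k = R k * D k" using Dk unfolding R_def E_def D_def r_def by simp
  have Dn_eq: "Dn = W + X" using D_win[of "Suc k"] u_Suc[of k] unfolding Dn_def W_def X_def P_def Q_def u_def by simp
  have En_eq: "En = W * R k + Y"
    using e_win[OF t_ge_N[of "Suc k"]] b_Suc[of k] Ek unfolding En_def E_def W_def Y_def P_def Q_def
    by (simp add: algebra_simps)
  have Dn_pos: "Dn > 0" using D_ge1 Dn_def by (smt (verit))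
  have RSuc: "R (Suc k) = En / Dn" unfolding R_def En_def Dn_def E_def D_def r_def by simp
  define \<epsilon> where "\<epsilon> = 1 / (B + 1)"
  have Bp: "B + 1 > 0" using B_pos by simp
  have epsW: "\<epsilon> * Dn \<le> W"
  proof -
    have "Dn \<le> (B + 1) * W" using weight[of k] k m unfolding Dn_def W_def by simp
    then show ?thesis unfolding \<epsilon>_def using Bp by (simp add: field_simps)
  qed
  have low: "En - mn * Dn \<ge> \<epsilon> * Dn * (R k - mn)"
  proof -
    have "En - mn * Dn = W * (R k - mn) + (Y - mn * X)" using En_eq Dn_eq by (simp add: algebra_simps)
    moreover have "W * (R k - mn) \<ge> \<epsilon> * Dn * (R k - mn)" using epsW Rk by (intro mult_right_mono) auto
    ultimately show ?thesis using XY by linarith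
  qed
  have up: "mx * Dn - En \<ge> \<epsilon> * Dn * (mx - R k)"
  proof -
    have "mx * Dn - En = W * (mx - R k) + (mx * X - Y)" using En_eq Dn_eq by (simp add: algebra_simps)
    moreover have "W * (mx - R k) \<ge> \<epsilon> * Dn * (mx - R k)" using epsW Rk by (intro mult_right_mono) auto
    ultimately show ?thesis using XY by linarith
  qed
  have "(mn + \<epsilon> * (R k - mn)) * Dn \<le> En" using low by (simp add: algebra_simps)
  then have "mn + \<epsilon> * (R k - mn) \<le> En / Dn"
    using pos_le_divide_eq[OF Dn_pos] by blast
  moreover have "En \<le> (mx - \<epsilon> * (mx - R k)) * Dn" using up by (simp add: algebra_simps)
  then have "En / Dn \<le> mx - \<epsilon> * (mx - R k)"
    using pos_divide_le_eq[OF Dn_pos] by blast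
  ultimately show ?thesis using RSuc unfolding \<epsilon>_def by simp
qed

lemma R_conv: "\<exists>L>0. R \<longlonglongrightarrow> L"
proof -
  obtain n where n: "B / c < 2 ^ n" using real_arch_pow[of 2 "B / c"] by auto
  define m where "m = max 1 n"
  have m1: "1 \<le> m" unfolding m_def by simp
  have "(2::real) ^ n \<le> 2 ^ m" unfolding m_def by (intro power_increasing) auto
  then have "B / c < 2 ^ m" using n by linarith
  then have mB: "B < 2 ^ m * c" using cpos by (simp add: pos_divide_less_eq)
  define \<epsilon> :: real where "\<epsilon> = 1 / (B + 1)"
  have ep: "0 < \<epsilon>" "\<epsilon> \<le> 1" unfolding \<epsilon>_def using B_pos by auto
  have "\<exists>L. R \<longlonglongrightarrow> L \<and> L \<ge> Min (R ` {(2*m+1) - 2*m..<2*m+1})"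
  proof (rule contraction_conv[of "2*m" \<epsilon> "2*m+1" R])
    show "1 \<le> 2 * m" using m1 by simp
    show "0 < \<epsilon>" "\<epsilon> \<le> 1" by (rule ep)+
    show "2 * m \<le> 2 * m + 1" by simp
    fix k' assume k': "2 * m + 1 \<le> k'"
    then obtain k where k: "k' = Suc k" "2 * m \<le> k" by (cases k') auto
    show "Min (R ` {k' - 2 * m..<k'}) + \<epsilon> * (R (k' - 1) - Min (R ` {k' - 2 * m..<k'})) \<le> R k' \<and>
          R k' \<le> Max (R ` {k' - 2 * m..<k'}) - \<epsilon> * (Max (R ` {k' - 2 * m..<k'}) - R (k' - 1))"
      using main_step[OF mB m1 k(2)] k(1) unfolding \<epsilon>_def by simp
  qed
  then obtain L where L: "R \<longlonglongrightarrow> L" "L \<ge> Min (R ` {1..<2*m+1})" by auto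
  have "Min (R ` {1..<2*m+1}) \<in> R ` {1..<2*m+1}" using m1 by (intro Min_in) auto
  then obtain j where "Min (R ` {1..<2*m+1}) = R j" by auto
  moreover have "R j > 0" unfolding R_def using r_pos t_ge1 by simp
  ultimately have "L > 0" using L(2) by linarith
  then show ?thesis using L(1) by blast
qed

lemma r_conv: "\<exists>L>0. r \<longlonglongrightarrow> L"
proof -
  obtain L where L: "L > 0" "R \<longlonglongrightarrow> L" using R_conv by auto
  have "r \<longlonglongrightarrow> L"
  proof (rule LIMSEQ_I)
    fix \<delta> :: real assume "\<delta> > 0"
    then obtain K where K: "\<forall>k\<ge>K. norm (R k - L) < \<delta>" using LIMSEQ_D[OF L(2)] by blast
    show "\<exists>no. \<forall>i\<ge>no. norm (r i - L) < \<delta>"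
    proof (intro exI allI impI)
      fix i assume i: "t K \<le> i"
      have "t 0 \<le> i" using i strict_mono_less_eq[OF t_strict, of 0 K] by simp
      then obtain k' where k': "t k' \<le> i" "i < t (Suc k')" using cover by blast
      have "K \<le> k'"
      proof (rule ccontr)
        assume "\<not> K \<le> k'"
        then have "t (Suc k') \<le> t K" using strict_mono_less_eq[OF t_strict] by simp
        then show False using i k' by simp
      qed
      moreover have "r i = R k'" using block_const[OF k'] unfolding r_def R_def by simp
      ultimately show "norm (r i - L) < \<delta>" using K by simp
    qed
  qed
  then show ?thesis using L by auto
qed

end

context setting begin
lemma r_conv_all: "\<exists>L>0. r \<longlonglongrightarrow> L"
proof (cases "finite J")
  case True then show ?thesis by (rule finite_case)
next
  case False
  then interpret inf_setting a b p N c by unfold_locales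
  show ?thesis by (rule r_conv)
qed
end




lemma psi_Inl: "is_psi_function psi \<Longrightarrow> i \<ge> 1 \<Longrightarrow> psi i = Inl j \<Longrightarrow> 1 \<le> j \<and> j \<le> i - 1"
  unfolding is_psi_function_def by (metis old.sum.simps(5))

lemma seq_rec:
  assumes "is_psi_function psi" "i \<ge> 1"
  shows "assoc_seq psi (Suc i) = (case psi i of Inl j \<Rightarrow> 2 * assoc_seq psi i - assoc_seq psi j | Inr _ \<Rightarrow> 2 * assoc_seq psi i + 1)"
proof -
  obtain i' where i': "i = Suc i'" using assms(2) by (cases i) auto
  show ?thesis
  proof (cases "psi i")
    case (Inl j)
    then have "j \<le> i - 1" using psi_Inl[OF assms] by blast
    then show ?thesis using Inl i' by simp
  next
    case (Inr x) then show ?thesis using i' by simp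
  qed
qed

lemma seq_mono:
  assumes psi: "is_psi_function psi" and i: "i \<ge> 1"
  shows "\<forall>j. 1 \<le> j \<and> j \<le> i \<longrightarrow> 0 \<le> assoc_seq psi j \<and> assoc_seq psi j + int (i - j) \<le> assoc_seq psi i"
  using i
proof (induction i rule: dec_induct)
  case base
  have "assoc_seq psi 1 = 0" by (simp add: One_nat_def)
  then show ?case by (auto simp: le_antisym)
next
  case (step i)
  let ?n = "assoc_seq psi"
  have ni: "0 \<le> ?n i" using step(3) step(1) by auto
  have "?n (Suc i) \<ge> ?n i + 1"
  proof (cases "psi i")
    case (Inl j)
    then have j: "1 \<le> j" "j \<le> i - 1" using psi_Inl[OF psi step(1)] by auto
    then have "?n j + int (i - j) \<le> ?n i" using step(3) by auto
    moreover have "int (i - j) \<ge> 1" using j step(1) by auto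
    ultimately show ?thesis using seq_rec[OF psi step(1)] Inl by simp
  next
    case (Inr x) then show ?thesis using seq_rec[OF psi step(1)] ni by simp
  qed
  then show ?case using step(3) ni by (auto simp: le_Suc_eq of_nat_diff)
qed




theorem proposition6p2:
  fixes psi :: "nat \<Rightarrow> nat + 'a" and n' :: "nat \<Rightarrow> int"
  assumes "reduced psi"
    and "delta psi < 2"
    and "\<forall>i\<ge>1. n' i \<ge> 0"
    and "\<forall>i j. 1 \<le> i \<and> i < j \<longrightarrow> n' i < n' j"
    and "\<exists>N. \<forall>i\<ge>N. \<forall>j. psi i = Inl j \<longrightarrow> n' (Suc i) = 2 * n' i - n' j"
  shows "(\<exists>L::real. L > 0 \<and>
            (\<lambda>i. real_of_int (n' i) / real_of_int (assoc_seq psi i)) \<longlonglongrightarrow> L)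
         \<and> delta psi = limsup (\<lambda>i. ereal (real_of_int (n' (Suc i)) / real_of_int (n' i)))"
proof -
  have psi: "is_psi_function psi" using assms(1) reduced_def by auto
  define a where "a i = real_of_int (assoc_seq psi i)" for i
  define b where "b i = real_of_int (n' i)" for i
  have da: "a (Suc i) - a i \<ge> 1" if "i \<ge> 1" for i
    using seq_mono[OF psi, of "Suc i"] that unfolding a_def by force
  have a0: "a i \<ge> 0" if "i \<ge> 1" for i
    using seq_mono[OF psi, of i] that unfolding a_def by force
  have a_ge: "a i \<ge> real i - 1" if "i \<ge> 1" for i
  proof -
    have "assoc_seq psi 1 + int (i - 1) \<le> assoc_seq psi i" using seq_mono[OF psi that] that by auto
    moreover have "assoc_seq psi 1 = 0" by (simp add: One_nat_def)
    ultimately show ?thesis unfolding a_def using that by (simp add: of_nat_diff)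
  qed
  have apos: "a i \<ge> 1" if "i \<ge> 2" for i using a_ge[of i] that by simp
  have bpos: "b i > 0" if "i \<ge> 2" for i
  proof -
    have "n' 1 \<ge> 0" using assms(3) by simp
    moreover have "n' 1 < n' i" using assms(4) that by simp
    ultimately show ?thesis unfolding b_def by simp
  qed
  have db: "b (Suc i) - b i > 0" if "i \<ge> 1" for i
    using assms(4) that unfolding b_def by simp
  obtain q where q: "delta psi < ereal q" "ereal q < 2" using ereal_dense2[OF assms(2)] by blast
  have q2: "q < 2" using q(2) by simp
  have "eventually (\<lambda>i. ereal (a (Suc i) / a i) < ereal q) sequentially"
    using Limsup_lessD[OF q(1)[unfolded delta_def]] unfolding a_def by simp
  then obtain N0 where N0: "\<forall>i\<ge>N0. a (Suc i) / a i < q" unfolding eventually_sequentially by auto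
  have cq: "\<exists>j. psi i = Inl j \<and> (2 - q) * a i < a j" if i: "i \<ge> max N0 2" for i
  proof -
    have ai: "a i \<ge> 1" using apos i by simp
    have "a (Suc i) / a i < q" using N0 i by simp
    then have lt: "a (Suc i) < q * a i" using ai by (simp add: pos_divide_less_eq)
    have qa: "q * a i < 2 * a i" using q2 ai by simp
    have rec: "assoc_seq psi (Suc i) = (case psi i of Inl j \<Rightarrow> 2 * assoc_seq psi i - assoc_seq psi j | Inr _ \<Rightarrow> 2 * assoc_seq psi i + 1)"
      using seq_rec[OF psi] i by simp
    show ?thesis
    proof (cases "psi i")
      case (Inl j)
      then have "a (Suc i) = 2 * a i - a j" using rec unfolding a_def by simp
      then show ?thesis using Inl lt by (auto simp: algebra_simps)
    next
      case (Inr x)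
      then have "a (Suc i) = 2 * a i + 1" using rec unfolding a_def by simp
      then show ?thesis using lt qa by simp
    qed
  qed
  obtain N2 where N2: "\<forall>i\<ge>N2. \<forall>j. psi i = Inl j \<longrightarrow> n' (Suc i) = 2 * n' i - n' j" using assms(5) by blast
  define N where "N = max (max N0 2) N2"
  define p where "p i = (case psi i of Inl j \<Rightarrow> j | Inr _ \<Rightarrow> 0)" for i
  have psiN: "psi i = Inl (p i) \<and> (2 - q) * a i < a (p i)" if "i \<ge> N" for i
    using cq[of i] that unfolding N_def p_def by auto
  have ppN: "1 \<le> p i \<and> p i < i" if "i \<ge> N" for i
  proof -
    have "i \<ge> 1" using that unfolding N_def by simp
    then show ?thesis using psi_Inl[OF psi _ conjunct1[OF psiN[OF that]]] by auto
  qed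
  have tsetN: "i \<in> tset psi \<longleftrightarrow> p i + 2 \<le> i" if "i \<ge> N" for i
    using psiN[OF that] ppN[OF that] unfolding tset_def by auto
  interpret S: setting a b p N "2 - q"
  proof
    show "1 \<le> N" unfolding N_def by simp
    show "1 \<le> p i \<and> p i < i" if "N \<le> i" for i using ppN that by simp
    show "a (Suc i) = 2 * a i - a (p i)" if "N \<le> i" for i
    proof -
      have "i \<ge> 1" using that unfolding N_def by simp
      then show ?thesis using seq_rec[OF psi, of i] psiN[OF that] unfolding a_def by simp
    qed
    show "b (Suc i) = 2 * b i - b (p i)" if "N \<le> i" for i
      using N2 psiN[OF that] that unfolding b_def N_def by simp
    show "1 \<le> a (Suc i) - a i" if "1 \<le> i" for i using da that by simp
    show "0 < b (Suc i) - b i" if "1 \<le> i" for i using db that by simp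
    show "0 \<le> a i" if "1 \<le> i" for i using a0 that by simp
    show "0 < 2 - q" using q2 by simp
    show "(2 - q) * a i < a (p i)" if "N \<le> i" for i using psiN that by simp
    fix s t assume st: "N \<le> s" "s < t" "p s + 2 \<le> s" "p t + 2 \<le> t"
      "\<forall>j. s < j \<and> j < t \<longrightarrow> \<not> p j + 2 \<le> j"
    have "s \<in> tset psi" "t \<in> tset psi" using tsetN st by auto
    moreover have "\<forall>j. s < j \<and> j < t \<longrightarrow> j \<notin> tset psi" using tsetN st by auto
    ultimately have "case psi t of Inl m \<Rightarrow> m < s | Inr _ \<Rightarrow> True"
      using assms(1) st(2) unfolding reduced_def by blast
    then show "p t < s" using psiN[of t] st by simp
  qed
  obtain L where L: "L > 0" "S.r \<longlonglongrightarrow> L" using S.r_conv_all by blast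
  have lim: "filterlim a at_top sequentially"
    unfolding filterlim_at_top
  proof
    fix Z :: real
    show "eventually (\<lambda>i. Z \<le> a i) sequentially"
    proof (rule eventually_sequentiallyI[of "nat \<lceil>Z\<rceil> + 1"])
      fix i assume i: "nat \<lceil>Z\<rceil> + 1 \<le> i"
      have "Z \<le> real (nat \<lceil>Z\<rceil>)" by (rule real_nat_ceiling_ge)
      also have "\<dots> \<le> real i - 1" using i by simp
      also have "\<dots> \<le> a i" using a_ge[of i] i by simp
      finally show "Z \<le> a i" .
    qed
  qed
  have sL: "(\<lambda>i. b i / a i) \<longlonglongrightarrow> L"
  proof (rule stolz[of N a])
    show "\<forall>i\<ge>N. a i < a (Suc i)"
    proof (intro allI impI)
      fix i assume "N \<le> i" then have "1 \<le> i" unfolding N_def by simp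
      then show "a i < a (Suc i)" using da[of i] by simp
    qed
    show "\<forall>i\<ge>N. 0 < a i" using apos unfolding N_def by force
    show "filterlim a at_top sequentially" by (rule lim)
    show "(\<lambda>i. (b (Suc i) - b i) / (a (Suc i) - a i)) \<longlonglongrightarrow> L"
      using L(2) unfolding S.r_def[abs_def] S.d_def S.e_def .
  qed
  have part1: "\<exists>L::real. L > 0 \<and> (\<lambda>i. real_of_int (n' i) / real_of_int (assoc_seq psi i)) \<longlonglongrightarrow> L"
    using sL L(1) unfolding a_def b_def by blast
  define s where "s i = b i / a i" for i
  have "(\<lambda>i. s (Suc i) / s i) \<longlonglongrightarrow> L / L"
    unfolding s_def by (rule tendsto_divide[OF LIMSEQ_Suc[OF sL] sL]) (use L(1) in simp)
  then have "(\<lambda>i. ereal (s (Suc i) / s i)) \<longlonglongrightarrow> ereal 1" using L(1) by (intro tendsto_ereal) simp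
  then have lm: "limsup (\<lambda>i. ereal (s (Suc i) / s i) * ereal (a (Suc i) / a i)) = ereal 1 * limsup (\<lambda>i. ereal (a (Suc i) / a i))"
    by (rule ereal_limsup_lim_mult) auto
  have ev: "eventually (\<lambda>i. ereal (b (Suc i) / b i) = ereal (s (Suc i) / s i) * ereal (a (Suc i) / a i)) sequentially"
  proof (rule eventually_sequentiallyI[of 2])
    fix i :: nat assume i: "2 \<le> i"
    have "a i \<ge> 1" "a (Suc i) \<ge> 1" "b i > 0" "b (Suc i) > 0" using apos bpos i by auto
    then show "ereal (b (Suc i) / b i) = ereal (s (Suc i) / s i) * ereal (a (Suc i) / a i)"
      unfolding s_def by (simp add: field_simps)
  qed
  have "limsup (\<lambda>i. ereal (b (Suc i) / b i)) = limsup (\<lambda>i. ereal (a (Suc i) / a i))"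
    using Limsup_eq[OF ev] lm by simp
  moreover have "delta psi = limsup (\<lambda>i. ereal (a (Suc i) / a i))" unfolding delta_def a_def by simp
  ultimately have part2: "delta psi = limsup (\<lambda>i. ereal (real_of_int (n' (Suc i)) / real_of_int (n' i)))"
    unfolding b_def by simp
  show ?thesis using part1 part2 by blast
qed


end
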